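(* For all integers $n\ge 86$ and all integers $k$ with $(n-1)^2/2\le k\le n^2/2$, $$b_k(n)-b_{k-1}(n)\;\ge\;C\,\frac{2^n}{n^{9/2}},\qquad\text{where } C=\frac{3\sqrt3}{2\sqrt2\,\pi^{3/2}}\approx 0.329.$$
   Context: $b_k(n)$ denotes the number of partitions of $k$ into distinct odd parts each at most $2n-1$; equivalently $\prod_{i=1}^n(1+q^{2i-1})=\sum_{k=0}^{n^2}b_k(n)q^k$. *)

theory Defs
  imports "HOL-Analysis.Analysis"
begin

definition b :: "int \<Rightarrow> nat \<Rightarrow> nat" where
  "b k n = card {S. S \<subseteq> {2*i+1 | i. i < n} \<and> int (\<Sum>S) = k}"

end

theory Submission
  imports Defs
begin


lemma int_exp:
  fixes m :: int
  shows "((\<lambda>x. exp(\<i> * (2 * of_int m * complex_of_real x))) has_integral (if m = 0 then of_real pi else 0)) {-pi/2..pi/2}"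
proof (cases "m = 0")
  case True
  then show ?thesis using has_integral_const_real[of "1::complex" "-pi/2" "pi/2"]
    by (simp add: scaleR_conv_of_real)
next
  case False
  define a where "a = \<i> * (2 * of_int m)"
  have a0: "a \<noteq> 0" using False by (simp add: a_def)
  have "\<And>t. t \<in> {-pi/2..pi/2} \<Longrightarrow> ((\<lambda>x. exp (a * complex_of_real x) / a) has_vector_derivative exp (a * t)) (at t within {-pi/2..pi/2})"
    using a0
    by (intro derivative_eq_intros has_complex_derivative_imp_has_vector_derivative [unfolded o_def] | simp)+
  then have "((\<lambda>t. exp(a * of_real t)) has_integral exp(a * complex_of_real (pi/2))/a - exp(a * of_real (-pi/2))/a) {-pi/2..pi/2}"
    by (intro fundamental_theorem_of_calculus) auto
  moreover have "exp(a * complex_of_real (pi/2)) = exp(a * of_real (-pi/2))"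
  proof -
    have "exp(a * complex_of_real (pi/2)) = exp(a * of_real (-pi/2)) * exp(a * of_real pi)"
      by (simp add: exp_add[symmetric] algebra_simps)
    moreover have "exp(a * of_real pi) = 1"
    proof -
      have "a * of_real pi = 2 * pi * \<i> * of_int m" by (simp add: a_def algebra_simps)
      then show ?thesis by (simp add: exp_eq_1)
    qed
    ultimately show ?thesis by simp
  qed
  ultimately show ?thesis using False by (simp add: a_def algebra_simps)
qed



definition F :: "nat \<Rightarrow> real \<Rightarrow> real" where
  "F n x = (\<Prod>i<n. cos ((2 * real i + 1) * x))"

lemma O_eq: "{2*i+1 | i. i < (n::nat)} = (\<lambda>i. 2*i+1) ` {..<n}"
  by auto

lemma GF:
  fixes A :: "nat set" assumes "finite A"
  shows "(\<Prod>y\<in>A. 1 + exp(\<i> * (2 * of_real x * of_nat y))) =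
         (\<Sum>S\<in>Pow A. exp(\<i> * (2 * of_real x * of_nat (\<Sum>S))))"
proof -
  have "(\<Prod>y\<in>A. exp(\<i> * (2 * of_real x * of_nat y)) + 1) =
        (\<Sum>S\<in>Pow A. (\<Prod>y\<in>S. exp(\<i> * (2 * of_real x * of_nat y))) * (\<Prod>y\<in>A-S. 1))"
    by (rule prod_add[OF assms])
  also have "\<dots> = (\<Sum>S\<in>Pow A. exp(\<i> * (2 * of_real x * of_nat (\<Sum>S))))"
  proof (rule sum.cong[OF refl])
    fix S assume "S \<in> Pow A"
    then have fS: "finite S" using assms finite_subset by auto
    have "(\<Prod>y\<in>S. exp(\<i> * (2 * of_real x * of_nat y))) = exp (\<Sum>y\<in>S. \<i> * (2 * of_real x * of_nat y))"
      by (simp add: exp_sum[OF fS])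
    also have "(\<Sum>y\<in>S. \<i> * (2 * of_real x * of_nat y)) = \<i> * (2 * of_real x * of_nat (\<Sum>S))"
      by (simp add: sum_distrib_left)
    finally show "(\<Prod>y\<in>S. exp(\<i> * (2 * of_real x * of_nat y))) * (\<Prod>y\<in>A-S. 1) = exp(\<i> * (2 * of_real x * of_nat (\<Sum>S)))"
      by simp
  qed
  finally show ?thesis by (simp add: add.commute)
qed

lemma coeff_int:
  fixes A :: "nat set" and k :: int assumes "finite A"
  shows "((\<lambda>x. exp(-\<i> * (2 * of_int k * complex_of_real x)) * (\<Prod>y\<in>A. 1 + exp(\<i> * (2 * of_real x * of_nat y))))
     has_integral (of_real (pi * real (card {S\<in>Pow A. int (\<Sum>S) = k})))) {-pi/2..pi/2}"
proof -
  have eq: "exp(-\<i> * (2 * of_int k * complex_of_real x)) * (\<Prod>y\<in>A. 1 + exp(\<i> * (2 * of_real x * of_nat y)))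
    = (\<Sum>S\<in>Pow A. exp(\<i> * (2 * of_int (int (\<Sum>S) - k) * complex_of_real x)))" for x
    unfolding GF[OF assms] sum_distrib_left
  proof (rule sum.cong[OF refl])
    fix S
    show "exp(-\<i> * (2 * of_int k * complex_of_real x)) * exp(\<i> * (2 * of_real x * of_nat (\<Sum>S))) =
        exp(\<i> * (2 * of_int (int (\<Sum>S) - k) * complex_of_real x))"
      by (simp add: exp_add[symmetric] algebra_simps)
  qed
  have "((\<lambda>x. \<Sum>S\<in>Pow A. exp(\<i> * (2 * of_int (int (\<Sum>S) - k) * complex_of_real x))) has_integral
        (\<Sum>S\<in>Pow A. (if int (\<Sum>S) - k = 0 then of_real pi else 0))) {-pi/2..pi/2}"
    by (rule has_integral_sum[OF finite_Pow_iff[THEN iffD2, OF assms]]) (rule int_exp)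
  moreover have "(\<Sum>S\<in>Pow A. (if int (\<Sum>S) - k = 0 then (of_real pi::complex) else 0)) =
      of_real (pi * real (card {S\<in>Pow A. int (\<Sum>S) = k}))"
    using assms by (simp add: sum.inter_filter[symmetric])
  ultimately show ?thesis unfolding eq by simp
qed

lemma sum_odd: "(\<Sum>i<n. 2 * real i + 1) = real n ^ 2"
  by (induction n) (auto simp: power2_eq_square algebra_simps)

lemma H_eq:
  "(\<Prod>y\<in>{2*i+1 | i. i < n}. 1 + exp(\<i> * (2 * of_real x * of_nat y))) =
    exp(\<i> * of_real (real n ^ 2 * x)) * of_real (2 ^ n * F n x)"
proof -
  have inj: "inj_on (\<lambda>i::nat. 2*i+1) {..<n}" by (auto simp: inj_on_def)
  have one: "1 + exp(\<i> * (2 * of_real x * of_nat (2*i+1))) =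
      exp(\<i> * of_real ((2 * real i + 1) * x)) * of_real (2 * cos ((2 * real i + 1) * x))" for i
  proof -
    have "complex_of_real (cos ((2 * real i + 1) * x)) = cos (of_real ((2 * real i + 1) * x))"
      by (rule cos_of_real[symmetric])
    also have "\<dots> = (exp(\<i> * of_real ((2 * real i + 1) * x)) + exp(-(\<i> * of_real ((2 * real i + 1) * x)))) / 2"
      by (rule cos_exp_eq)
    finally have c: "complex_of_real (cos ((2 * real i + 1) * x)) = \<dots>" .
    show ?thesis unfolding of_real_mult c
      by (simp add: algebra_simps exp_add[symmetric] exp_minus field_simps)
  qed
  have "(\<Prod>y\<in>{2*i+1 | i. i < n}. 1 + exp(\<i> * (2 * of_real x * of_nat y))) =
     (\<Prod>i<n. exp(\<i> * of_real ((2 * real i + 1) * x)) * of_real (2 * cos ((2 * real i + 1) * x)))"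
    unfolding O_eq prod.reindex[OF inj] by (rule prod.cong[OF refl]) (simp only: comp_def one)
  also have "\<dots> = (\<Prod>i<n. exp(\<i> * of_real ((2 * real i + 1) * x))) * (\<Prod>i<n. of_real (2 * cos ((2 * real i + 1) * x)))"
    by (rule prod.distrib)
  also have "(\<Prod>i<n. exp(\<i> * of_real ((2 * real i + 1) * x))) = exp (\<Sum>i<n. \<i> * of_real ((2 * real i + 1) * x))"
    by (simp add: exp_sum)
  also have "(\<Sum>i<n. \<i> * of_real ((2 * real i + 1) * x)) = \<i> * of_real (real n ^ 2 * x)"
  proof -
    have "(\<Sum>i<n. \<i> * of_real ((2 * real i + 1) * x)) = \<i> * of_real (\<Sum>i<n. (2 * real i + 1) * x)"
      by (simp only: sum_distrib_left of_real_sum)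
    also have "(\<Sum>i<n. (2 * real i + 1) * x) = real n ^ 2 * x"
      by (simp only: sum_distrib_right[symmetric] sum_odd)
    finally show ?thesis .
  qed
  also have "(\<Prod>i<n. complex_of_real (2 * cos ((2 * real i + 1) * x))) = of_real (2 ^ n * F n x)"
    by (simp add: F_def prod.distrib)
  finally show ?thesis .
qed



lemma b_card: "b k n = card {S\<in>Pow {2*i+1 | i. i < n}. int (\<Sum>S) = k}"
  unfolding b_def by (rule arg_cong[where f=card]) auto

lemma key_integral:
  fixes n :: nat and k :: int
  defines "M \<equiv> real n ^ 2 - 2 * real_of_int k"
  shows "((\<lambda>x. (cos (M * x) - cos ((M + 2) * x)) * (2 ^ n * F n x)) has_integral
           pi * (real (b k n) - real (b (k - 1) n))) {-pi/2..pi/2}"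
proof -
  define A where "A = {2*i+1 | i. i < n}"
  have fA: "finite A" unfolding A_def O_eq by simp
  define H where "H x = (\<Prod>y\<in>A. 1 + exp(\<i> * (2 * of_real x * of_nat y)))" for x
  have i1: "((\<lambda>x. exp(-\<i> * (2 * of_int k * complex_of_real x)) * H x) has_integral of_real (pi * real (b k n))) {-pi/2..pi/2}"
    using coeff_int[OF fA, of k] unfolding H_def b_card A_def .
  have i2: "((\<lambda>x. exp(-\<i> * (2 * of_int (k-1) * complex_of_real x)) * H x) has_integral of_real (pi * real (b (k-1) n))) {-pi/2..pi/2}"
    using coeff_int[OF fA, of "k-1"] unfolding H_def b_card A_def .
  have "((\<lambda>x. exp(-\<i> * (2 * of_int k * complex_of_real x)) * H x - exp(-\<i> * (2 * of_int (k-1) * complex_of_real x)) * H x)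
     has_integral (of_real (pi * real (b k n)) - of_real (pi * real (b (k-1) n)))) {-pi/2..pi/2}"
    by (rule has_integral_diff[OF i1 i2])
  from has_integral_Re[OF this]
  have "((\<lambda>x. Re (exp(-\<i> * (2 * of_int k * complex_of_real x)) * H x - exp(-\<i> * (2 * of_int (k-1) * complex_of_real x)) * H x))
     has_integral pi * (real (b k n) - real (b (k - 1) n))) {-pi/2..pi/2}"
    by (simp add: algebra_simps)
  moreover have "Re (exp(-\<i> * (2 * of_int k * complex_of_real x)) * H x - exp(-\<i> * (2 * of_int (k-1) * complex_of_real x)) * H x)
     = (cos (M * x) - cos ((M + 2) * x)) * (2 ^ n * F n x)" for x
  proof -
    have H: "H x = exp(\<i> * of_real (real n ^ 2 * x)) * of_real (2 ^ n * F n x)"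
      unfolding H_def A_def by (rule H_eq)
    have e1: "exp(-\<i> * (2 * of_int k * complex_of_real x)) * exp(\<i> * of_real (real n ^ 2 * x)) = exp(\<i> * of_real (M * x))"
      by (simp add: exp_add[symmetric] M_def algebra_simps)
    have e2: "exp(-\<i> * (2 * of_int (k-1) * complex_of_real x)) * exp(\<i> * of_real (real n ^ 2 * x)) = exp(\<i> * of_real ((M+2) * x))"
      by (simp add: exp_add[symmetric] M_def algebra_simps)
    have "exp(-\<i> * (2 * of_int k * complex_of_real x)) * H x - exp(-\<i> * (2 * of_int (k-1) * complex_of_real x)) * H x
       = (exp(\<i> * of_real (M * x)) - exp(\<i> * of_real ((M+2) * x))) * of_real (2 ^ n * F n x)"
    proof -
      have "exp(-\<i> * (2 * of_int k * complex_of_real x)) * H x - exp(-\<i> * (2 * of_int (k-1) * complex_of_real x)) * H x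
        = (exp(-\<i> * (2 * of_int k * complex_of_real x)) * exp(\<i> * of_real (real n ^ 2 * x))) * of_real (2 ^ n * F n x)
          - (exp(-\<i> * (2 * of_int (k-1) * complex_of_real x)) * exp(\<i> * of_real (real n ^ 2 * x))) * of_real (2 ^ n * F n x)"
        by (simp only: H mult.assoc)
      also have "\<dots> = (exp(\<i> * of_real (M * x)) - exp(\<i> * of_real ((M+2) * x))) * of_real (2 ^ n * F n x)"
        by (simp only: e1 e2 left_diff_distrib)
      finally show ?thesis .
    qed
    then show ?thesis by (simp add: Re_exp)
  qed
  ultimately show ?thesis by simp
qed



lemma exp_taylor_lower:
  fixes x :: real assumes "0 \<le> x"
  shows "(\<Sum>m<N. x ^ m / fact m) \<le> exp x"
proof -
  obtain t where t: "\<bar>t\<bar> \<le> \<bar>x\<bar>" "exp x = (\<Sum>m<N. (x ^ m) / fact m) + (exp t / fact N) * x ^ N"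
    using Maclaurin_exp_le by blast
  have "0 \<le> (exp t / fact N) * x ^ N" using assms by simp
  then show ?thesis using t by linarith
qed

lemma cos_lower: "1 - x\<^sup>2 / 2 \<le> cos (x::real)"
proof -
  have "cos x = 1 - 2 * (sin (x/2))\<^sup>2"
    using cos_double[of "x/2"] sin_squared_eq[of "x/2"] by simp
  moreover have "(sin (x/2))\<^sup>2 \<le> (x/2)\<^sup>2"
    by (rule abs_le_square_iff[THEN iffD1]) (rule abs_sin_x_le_abs_x)
  ultimately show ?thesis by (simp add: power_divide)
qed

lemma sin_lower:
  fixes x :: real assumes "0 \<le> x"
  shows "x - x^3/6 \<le> sin x"
proof -
  let ?g = "\<lambda>t. sin t - t + t^3/6"
  have "?g 0 \<le> ?g x"
  proof (rule DERIV_nonneg_imp_nondecreasing[OF assms])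
    fix t :: real assume "0 \<le> t" "t \<le> x"
    have "(?g has_real_derivative (cos t - 1 + t\<^sup>2/2)) (at t)"
      by (auto intro!: derivative_eq_intros simp: power2_eq_square)
    moreover have "cos t - 1 + t\<^sup>2/2 \<ge> 0" using cos_lower[of t] by simp
    ultimately show "\<exists>y. (?g has_real_derivative y) (at t) \<and> 0 \<le> y" by blast
  qed
  then show ?thesis by simp
qed

lemma one_minus_le_exp:
  fixes y :: real assumes "0 \<le> y"
  shows "1 - y \<le> exp (-(y + y\<^sup>2/2))"
proof -
  let ?f = "\<lambda>t. exp (-(t + t\<^sup>2/2)) - (1 - t)"
  have "?f 0 \<le> ?f y"
  proof (rule DERIV_nonneg_imp_nondecreasing[OF assms])
    fix t :: real assume t: "0 \<le> t" "t \<le> y"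
    have "(?f has_real_derivative (exp (-(t + t\<^sup>2/2)) * (-(1 + t)) + 1)) (at t)"
      by (auto intro!: derivative_eq_intros simp: power2_eq_square algebra_simps)
    moreover have "exp (-(t + t\<^sup>2/2)) * (1 + t) \<le> 1"
    proof -
      have "1 + t \<le> exp (t + t\<^sup>2/2)"
        using exp_ge_add_one_self[of "t + t\<^sup>2/2"] zero_le_power2[of t] by linarith
      then show ?thesis by (simp add: exp_minus field_simps)
    qed
    ultimately show "\<exists>z. (?f has_real_derivative z) (at t) \<and> 0 \<le> z"
      by (intro exI[of _ "exp (-(t + t\<^sup>2/2)) * (-(1 + t)) + 1"]) (auto simp: algebra_simps)
  qed
  then show ?thesis by simp
qed

lemma abs_cos_upper: "\<bar>cos (x::real)\<bar> \<le> exp (-((sin x)^2/2 + (sin x)^4/4))"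
proof -
  define y where "y = (sin x)^2"
  have y0: "0 \<le> y" by (simp add: y_def)
  have "(cos x)\<^sup>2 = 1 - y" by (simp add: y_def cos_squared_eq)
  also have "\<dots> \<le> exp (-(y + y\<^sup>2/2))" by (rule one_minus_le_exp[OF y0])
  also have "\<dots> = (exp (-(y/2 + y\<^sup>2/4)))\<^sup>2"
    by (simp add: exp_double[symmetric] algebra_simps power2_eq_square) (simp add: exp_add[symmetric])
  finally have "\<bar>cos x\<bar> \<le> exp (-(y/2 + y\<^sup>2/4))"
    using abs_le_square_iff by (metis abs_exp_cancel power2_abs)
  then show ?thesis by (simp add: y_def power2_eq_square power4_eq_xxxx mult.assoc)
qed

lemma telescope: "2 * sin a * (\<Sum>i<n. cos ((2 * real i + 1) * a)) = sin (2 * real n * a)"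
proof (induction n)
  case 0 then show ?case by simp
next
  case (Suc n)
  have "2 * sin a * cos ((2 * real n + 1) * a) = sin ((2 * real n + 2) * a) - sin (2 * real n * a)"
    using sin_times_cos[of a "(2 * real n + 1) * a"] by (simp add: algebra_simps)
  then show ?case using Suc by (simp add: algebra_simps)
qed

lemma sum_sq_odd: "(\<Sum>i<n. (2 * real i + 1)^2) = real n * (4 * real n ^ 2 - 1) / 3"
  by (induction n) (auto simp: power2_eq_square field_simps)

lemma sum_4_odd: "(\<Sum>i<n. (2 * real i + 1)^4) = real n * (2*real n - 1) * (2 * real n + 1) * (12 * real n^2 - 7) / 15"
  by (induction n) (auto simp: power2_eq_square power4_eq_xxxx field_simps)



lemma sin_pow_id: "(sin (y::real))^2/2 + (sin y)^4/4 = 11/32 - 3/8 * cos (2*y) + cos (4*y) / 32"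
proof -
  have c2: "cos (2*y) = 1 - 2 * (sin y)^2" by (rule cos_double_sin)
  have c4: "cos (4*y) = 1 - 2 * (sin (2*y))^2" using cos_double_sin[of "2*y"] by simp
  have s2: "sin (2*y) = 2 * sin y * cos y" by (rule sin_double)
  have cc: "(cos y)^2 = 1 - (sin y)^2" by (rule cos_squared_eq)
  show ?thesis unfolding c2 c4 s2 power_mult_distrib cc
    by (simp add: power2_eq_square power4_eq_xxxx field_simps)
qed

lemma F_G:
  "\<bar>F n x\<bar> \<le> exp (-(11 * real n / 32 - 3/8 * (\<Sum>i<n. cos ((2 * real i + 1) * (2*x)))
                     + (\<Sum>i<n. cos ((2 * real i + 1) * (4*x))) / 32))"
proof -
  have "\<bar>F n x\<bar> = (\<Prod>i<n. \<bar>cos ((2 * real i + 1) * x)\<bar>)"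
    by (simp add: F_def abs_prod)
  also have "\<dots> \<le> (\<Prod>i<n. exp (-((sin ((2 * real i + 1) * x))^2/2 + (sin ((2 * real i + 1) * x))^4/4)))"
    by (intro prod_mono conjI abs_cos_upper) simp
  also have "\<dots> = exp (\<Sum>i<n. -((sin ((2 * real i + 1) * x))^2/2 + (sin ((2 * real i + 1) * x))^4/4))"
    by (simp add: exp_sum)
  also have "(\<Sum>i<n. -((sin ((2 * real i + 1) * x))^2/2 + (sin ((2 * real i + 1) * x))^4/4))
      = (\<Sum>i<n. -(11/32 - 3/8 * cos ((2 * real i + 1) * (2*x)) + cos ((2 * real i + 1) * (4*x)) / 32))"
    by (rule sum.cong[OF refl]) (simp add: sin_pow_id mult.commute mult.left_commute, simp add: algebra_simps)
  also have "\<dots> = -(11 * real n / 32 - 3/8 * (\<Sum>i<n. cos ((2 * real i + 1) * (2*x)))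
                     + (\<Sum>i<n. cos ((2 * real i + 1) * (4*x))) / 32)"
    by (simp add: sum.distrib sum_subtractf sum_distrib_left sum_divide_distrib)
  finally show ?thesis .
qed

lemma sum_cos_ge: "- real n \<le> (\<Sum>i<n. cos ((2 * real i + 1) * a))"
proof -
  have "(\<Sum>i<n. -1) \<le> (\<Sum>i<n. cos ((2 * real i + 1) * a))"
    by (intro sum_mono) simp
  then show ?thesis by simp
qed

lemma sin_ge_on:
  fixes a z :: real
  assumes "0 \<le> a" "a \<le> pi/2" "a \<le> z" "z \<le> pi - a"
  shows "sin a \<le> sin z"
proof (cases "z \<le> pi/2")
  case True then show ?thesis using assms by (intro sin_monotone_2pi_le) auto
next
  case False
  have "sin a \<le> sin (pi - z)" using assms False by (intro sin_monotone_2pi_le) auto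
  then show ?thesis by simp
qed

lemma sin_le_quarter: "0 \<le> z \<Longrightarrow> sin z \<le> (z + pi) / 4"
proof (cases "z \<le> pi / 3")
  case True
  assume "0 \<le> z"
  then have "sin z \<le> z" by (rule sin_x_le_x)
  then show ?thesis using True by simp
next
  case False
  then have "1 \<le> (z + pi)/4" using pi_gt3 by simp
  then show ?thesis using sin_le_one[of z] by linarith
qed



lemma pi_bounds: "3.14159 \<le> pi" "pi \<le> 3.1416"
  using pi_approx by simp_all

lemma sin_2npi_minus: "sin (2*pi*real m - y) = - sin y"
  using sin_integer_2pi[of "real m"] cos_integer_2pi[of "real m"]
  by (simp add: sin_diff)

lemma T_bound:
  fixes sv tv sx u sg :: real
  assumes "2 * sv * tv = sx" "0 < sg" "sg \<le> sv" "sx \<le> u" "0 \<le> u"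
  shows "tv \<le> u/(2 * sg)"
proof (cases "tv \<le> 0")
  case True
  have "0 \<le> u/(2 * sg)" using assms by simp
  then show ?thesis using True by linarith
next
  case False
  then have "tv * (2 * sg) \<le> tv * (2 * sv)" using assms by (intro mult_left_mono) auto
  also have "\<dots> = sx" using assms by (simp add: algebra_simps)
  finally have "tv * (2 * sg) \<le> u" using assms by linarith
  then show ?thesis using assms by (simp add: field_simps)
qed

lemma sin_lower_rel:
  fixes z c :: real assumes "0 \<le> z" "z \<le> c"
  shows "z * (1 - c^2/6) \<le> sin z"
proof -
  have "z*z \<le> c*c" using assms by (intro mult_mono) auto
  then have "z*(z*z) \<le> z*(c*c)" using assms by (intro mult_left_mono) auto
  then have "z^3 \<le> z * c^2" by (simp add: power3_eq_cube power2_eq_square mult.assoc)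
  then show ?thesis using sin_lower[OF assms(1)] by (simp add: algebra_simps)
qed

lemma T1_mid:
  fixes n :: nat and x :: real
  assumes n: "n \<ge> 86" and x1: "pi/(4*n) \<le> x" and x2: "x \<le> pi/2 - 7/(4*n)"
  shows "(\<Sum>i<n. cos ((2 * real i + 1) * (2*x))) \<le> real n / 6.98"
proof -
  define T where "T = (\<Sum>i<n. cos ((2 * real i + 1) * (2*x)))"
  have nr: "real n \<ge> 86" using n by simp
  have tel: "2 * sin (2*x) * T = sin (4 * real n * x)"
    unfolding T_def using telescope[of "2*x" n] by (simp add: algebra_simps)
  have "0 < pi/(4*n)" using nr by simp
  then have xpos: "0 < x" using x1 by linarith
  have "0 < 7/(4*real n)" using nr by simp
  then have "x < pi/2" using x2 by linarith
  then have s2pos: "0 < sin (2*x)" using xpos by (intro sin_gt_zero) auto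
  show ?thesis
  proof (cases "x \<ge> 7/(4*n)")
    case True
    define a where "a = 7/(2*real n)"
    have a0: "0 \<le> a" and a1: "a \<le> 7/172" using nr by (auto simp: a_def field_simps)
    have "a \<le> pi/2" using a1 pi_gt3 by linarith
    moreover have "a \<le> 2*x" "2*x \<le> pi - a" using True x2 nr by (auto simp: a_def field_simps)
    ultimately have "sin a \<le> sin (2*x)" using a0 by (intro sin_ge_on) auto
    moreover have "a * (1 - (7/172)^2/6) \<le> sin a" using sin_lower_rel[OF a0 a1] .
    moreover have "3.49 / real n \<le> a * (1 - (7/172)^2/6)" using nr by (simp add: a_def field_simps)
    ultimately have "3.49 / real n \<le> sin (2*x)" by linarith
    from T_bound[OF tel _ this sin_le_one] have "T \<le> 1 / (2 * (3.49 / real n))" using nr by simp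
    then show ?thesis unfolding T_def using nr by (simp add: field_simps)
  next
    case False
    then have x3: "x \<le> 7/(4*n)" by simp
    have "pi \<le> 4 * real n * x" using x1 nr by (simp add: field_simps)
    show ?thesis
    proof (cases "4 * real n * x < 2 * pi")
      case True
      then have "sin (4 * real n * x) \<le> 0" using \<open>pi \<le> 4 * real n * x\<close> by (intro sin_le_zero)
      from T_bound[OF tel _ order.refl this order.refl] s2pos have "T \<le> 0" by simp
      then show ?thesis unfolding T_def by simp
    next
      case False
      then have y2: "2 * pi \<le> 4 * real n * x" by simp
      have "sin (4 * real n * x) = sin (4 * real n * x - 2*pi)" by (simp add: sin_diff)
      also have "\<dots> \<le> 4 * real n * x - 2*pi" using y2 by (intro sin_x_le_x) simp
      also have "\<dots> \<le> 7 - 2 * pi" using x3 nr by (simp add: field_simps)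
      also have "\<dots> \<le> 0.7169" using pi_bounds by simp
      finally have S: "sin (4 * real n * x) \<le> 0.7169" .
      have "x * 344 \<le> x * (4 * real n)" using xpos nr by (intro mult_left_mono) auto
      moreover have "x * (4 * real n) \<le> 7" using x3 nr by (simp add: field_simps)
      ultimately have z1: "2*x \<le> 7/172" by linarith
      have z0: "0 \<le> 2*x" using xpos by simp
      have "2*x*(1 - (7/172)^2/6) \<le> sin (2*x)" using sin_lower_rel[OF z0 z1] .
      moreover have "3.13 / real n \<le> 2*x*(1 - (7/172)^2/6)"
      proof -
        have "pi/real n \<le> 2*x" using y2 nr by (simp add: field_simps)
        then have A: "(pi / real n) * (1 - (7/172)^2/6) \<le> 2*x*(1 - (7/172)^2/6)"
          by (intro mult_right_mono) (simp_all add: power2_eq_square)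
        have "3.13 / real n \<le> (pi / real n) * (1 - (7/172)^2/6)"
          using pi_bounds nr by (simp add: field_simps)
        then show ?thesis using A by linarith
      qed
      ultimately have "3.13 / real n \<le> sin (2*x)" by linarith
      from T_bound[OF tel _ this S] nr have "T \<le> 0.7169 / (2 * (3.13 / real n))" by simp
      then show ?thesis unfolding T_def using nr by (simp add: field_simps)
    qed
  qed
qed



lemma F_mid:
  fixes n :: nat and x :: real
  assumes n: "n \<ge> 86" and x1: "pi/(4*n) \<le> x" and x2: "x \<le> pi/2 - 7/(4*n)"
  shows "\<bar>F n x\<bar> \<le> exp (- (0.2587 * real n))"
proof -
  have "\<bar>F n x\<bar> \<le> exp (-(11 * real n / 32 - 3/8 * (\<Sum>i<n. cos ((2 * real i + 1) * (2*x)))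
                     + (\<Sum>i<n. cos ((2 * real i + 1) * (4*x))) / 32))" by (rule F_G)
  also have "\<dots> \<le> exp (- (0.2587 * real n))"
    using T1_mid[OF assms] sum_cos_ge[of n "4*x"] by simp
  finally show ?thesis .
qed

lemma F_end:
  fixes n :: nat and x :: real
  assumes n: "n \<ge> 86" and x1: "pi/2 - 7/(4*n) \<le> x" and x2: "x \<le> pi/2"
  shows "\<bar>F n x\<bar> \<le> exp (- (0.2449 * real n))"
proof (cases "x = pi/2")
  case True
  have "F n x = 0" unfolding F_def True
    using n by (intro prod_zero bexI[of _ 0]) auto
  then show ?thesis by simp
next
  case False
  define p where "p = pi/2 - x"
  have nr: "real n \<ge> 86" using n by simp
  have p0: "0 < p" using False x2 by (simp add: p_def)
  have p1: "p \<le> 7/(4*real n)" using x1 by (simp add: p_def)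
  have xp: "x = pi/2 - p" by (simp add: p_def)
  define T1 where "T1 = (\<Sum>i<n. cos ((2 * real i + 1) * (2*x)))"
  define T2 where "T2 = (\<Sum>i<n. cos ((2 * real i + 1) * (4*x)))"
  have p344: "p * 344 \<le> p * (4 * real n)" using p0 nr by (intro mult_left_mono) auto
  have "p * (4 * real n) \<le> 7" using p1 nr by (simp add: field_simps)
  then have pc: "4*p \<le> 7/86" using p344 by linarith
  have tel1: "2 * sin (2*p) * T1 = - sin (4 * real n * p)"
  proof -
    have "2 * sin (2*x) * T1 = sin (4 * real n * x)"
      unfolding T1_def using telescope[of "2*x" n] by (simp add: algebra_simps)
    moreover have "sin (2*x) = sin (2*p)" unfolding xp by (simp add: algebra_simps)
    moreover have "sin (4 * real n * x) = - sin (4 * real n * p)"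
      unfolding xp using sin_2npi_minus[of n "4 * real n * p"] by (simp add: algebra_simps)
    ultimately show ?thesis by simp
  qed
  have tel2: "2 * sin (4*p) * (-T2) = - sin (8 * real n * p)"
  proof -
    have "2 * sin (4*x) * T2 = sin (8 * real n * x)"
      unfolding T2_def using telescope[of "4*x" n] by (simp add: algebra_simps)
    moreover have "sin (4*x) = - sin (4*p)"
      unfolding xp using sin_2npi_minus[of 1 "4*p"] by (simp add: algebra_simps)
    moreover have "sin (8 * real n * x) = - sin (8 * real n * p)"
      unfolding xp using sin_2npi_minus[of "2*n" "8 * real n * p"] by (simp add: algebra_simps)
    ultimately show ?thesis by simp
  qed
  have s2p: "0 < sin (2*p)" using p0 pc pi_gt3 by (intro sin_gt_zero) auto
  have G: "0.2449 * real n \<le> 11 * real n / 32 - 3/8 * T1 + T2 / 32"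
  proof (cases "pi \<le> 4 * real n * p \<and> 4 * real n * p \<le> 2 * pi")
    case False
    have "0 \<le> sin (4 * real n * p)"
    proof (cases "4 * real n * p \<le> pi")
      case True then show ?thesis using p0 by (intro sin_ge_zero) auto
    next
      case False
      with \<open>\<not> (pi \<le> 4 * real n * p \<and> 4 * real n * p \<le> 2 * pi)\<close> have y2: "2*pi < 4 * real n * p" by auto
      have "4 * real n * p \<le> 7" using p1 nr by (simp add: field_simps)
      then have "4 * real n * p - 2*pi \<le> pi" using pi_bounds by simp
      then have "0 \<le> sin (4 * real n * p - 2*pi)" using y2 by (intro sin_ge_zero) auto
      then show ?thesis by (simp add: sin_diff)
    qed
    then have "- sin (4 * real n * p) \<le> 0" by simp
    from T_bound[OF tel1 s2p order.refl this order.refl] have "T1 \<le> 0" by simp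
    then show ?thesis using sum_cos_ge[of n "4*x"] unfolding T2_def by simp
  next
    case True
    then have y1: "pi \<le> 4 * real n * p" and y2: "4 * real n * p \<le> 2 * pi" by auto
    have "- sin (4 * real n * p) = sin (4 * real n * p - pi)" by simp
    also have "\<dots> \<le> (4 * real n * p - pi + pi)/4" using y1 by (intro sin_le_quarter) simp
    also have "\<dots> = real n * p" by simp
    finally have S1: "- sin (4 * real n * p) \<le> real n * p" .
    have z0: "0 \<le> 2*p" using p0 by simp
    have z1: "2*p \<le> 7/172" using pc by simp
    have k1: "2*p*(1 - (7/172)^2/6) \<le> sin (2*p)" by (rule sin_lower_rel[OF z0 z1])
    have k1p: "0 < 2*p*(1 - (7/172)^2/6)" using p0 by (simp add: power2_eq_square)
    from T_bound[OF tel1 k1p k1 S1] p0 have "T1 \<le> real n * p / (2 * (2*p*(1 - (7/172)^2/6)))" by simp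
    also have "\<dots> = real n / (4 * (1 - (7/172)^2/6))" using p0 by (simp add: field_simps)
    finally have T1b: "T1 \<le> real n / (4 * (1 - (7/172)^2/6))" .
    have "-T2 \<le> real n / 6.276"
    proof -
      have z0: "0 \<le> 4*p" using p0 by simp
      have k: "4*p*(1 - (7/86)^2/6) \<le> sin (4*p)" by (rule sin_lower_rel[OF z0 pc])
      have "pi/real n \<le> 4*p" using y1 nr by (simp add: field_simps)
      then have A: "(pi / real n) * (1 - (7/86)^2/6) \<le> 4*p*(1 - (7/86)^2/6)"
        by (intro mult_right_mono) (simp_all add: power2_eq_square)
      have "3.138 / real n \<le> (pi / real n) * (1 - (7/86)^2/6)"
        using pi_bounds nr by (simp add: field_simps)
      then have s4: "3.138 / real n \<le> sin (4*p)" using A k by linarith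
      have m1: "- sin (8 * real n * p) \<le> 1" using sin_ge_minus_one[of "8 * real n * p"] by linarith
      from T_bound[OF tel2 _ s4 m1] nr have "-T2 \<le> 1 / (2 * (3.138 / real n))" by simp
      then show ?thesis using nr by (simp add: field_simps)
    qed
    then show ?thesis using T1b nr by (simp add: field_simps)
  qed
  have "\<bar>F n x\<bar> \<le> exp (-(11 * real n / 32 - 3/8 * T1 + T2 / 32))"
    unfolding T1_def T2_def by (rule F_G)
  also have "\<dots> \<le> exp (- (0.2449 * real n))" using G by simp
  finally show ?thesis .
qed



definition Apoly :: "real \<Rightarrow> real \<Rightarrow> real \<Rightarrow> real" where
  "Apoly e1 e2 t = ((2/3) * t^3 + (-16/15) * t^5 + (16/21) * t^7 + (-64/243) * t^9 + (32/891) * t^11)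
     - e1 * ((2/5) * t^5 + (-16/21) * t^7 + (16/27) * t^9 + (-64/297) * t^11 + (32/1053) * t^13)
     - e2 * ((2/7) * t^7 + (-16/27) * t^9 + (16/33) * t^11 + (-64/351) * t^13 + (32/1215) * t^15)"

definition qpoly :: "real \<Rightarrow> real \<Rightarrow> real \<Rightarrow> real" where
  "qpoly e1 e2 t = 2 * t^2 * (1 - 2/3 * t^2)^4 * (1 - e1 * t^2 - e2 * t^4)"

lemma Apoly_deriv: "(Apoly e1 e2 has_real_derivative qpoly e1 e2 t) (at t)"
proof -
  have "(Apoly e1 e2 has_real_derivative
     ((2/3) * (3 * t^2) + (-16/15) * (5*t^4) + (16/21) * (7*t^6) + (-64/243) * (9*t^8) + (32/891) * (11*t^10))
     - e1 * ((2/5) * (5*t^4) + (-16/21) * (7*t^6) + (16/27) * (9*t^8) + (-64/297) * (11*t^10) + (32/1053) * (13*t^12))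
     - e2 * ((2/7) * (7*t^6) + (-16/27) * (9*t^8) + (16/33) * (11*t^10) + (-64/351) * (13*t^12) + (32/1215) * (15*t^14))) (at t)"
    unfolding Apoly_def[abs_def]
    by (auto intro!: derivative_eq_intros)
  moreover have "((2/3) * (3 * t^2) + (-16/15) * (5*t^4) + (16/21) * (7*t^6) + (-64/243) * (9*t^8) + (32/891) * (11*t^10))
     - e1 * ((2/5) * (5*t^4) + (-16/21) * (7*t^6) + (16/27) * (9*t^8) + (-64/297) * (11*t^10) + (32/1053) * (13*t^12))
     - e2 * ((2/7) * (7*t^6) + (-16/27) * (9*t^8) + (16/33) * (11*t^10) + (-64/351) * (13*t^12) + (32/1215) * (15*t^14))
     = qpoly e1 e2 t"
    unfolding qpoly_def by algebra
  ultimately show ?thesis by simp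
qed

lemma Apoly_1: "Apoly e1 e2 1 = 12578/93555 - e1 * (18482/405405) - e2 * (26722/1216215)"
  by (simp add: Apoly_def)

lemma Apoly_0: "Apoly e1 e2 0 = 0"
  by (simp add: Apoly_def)



lemma exp_ge_pow4: fixes u :: real assumes "0 \<le> u" "u \<le> 4" shows "(1 - u/4)^4 \<le> exp (-u)"
proof -
  have "(1 - u/4)^4 \<le> (exp (-u/4))^4"
    using assms exp_ge_add_one_self[of "-u/4"] by (intro power_mono) auto
  also have "\<dots> = exp (-u)" by (simp add: exp_of_nat_mult[symmetric])
  finally show ?thesis .
qed

lemma F_lower:
  fixes n :: nat and x :: real
  assumes n1: "1 \<le> n" and x0: "0 \<le> x" and x1: "2 * real n * x \<le> 1"
    and u4: "2/3 * real n^3 * x^2 \<le> 4" and v1: "8/5 * real n^5 * x^4 \<le> 1"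
  shows "(1 - real n^3 * x^2 / 6)^4 * (1 - 8/5 * real n^5 * x^4) \<le> F n x"
proof -
  define a where "a i = ((2 * real i + 1) * x)^2 / 2" for i :: nat
  have ci: "exp (-(a i + 2 * (a i)^2)) \<le> cos ((2 * real i + 1) * x)" if i: "i < n" for i
  proof -
    have "(2 * real i + 1) * x \<le> 2 * real n * x"
      using i x0 by (intro mult_right_mono) auto
    then have le1: "(2 * real i + 1) * x \<le> 1" using x1 by linarith
    have ge0: "0 \<le> (2 * real i + 1) * x" using x0 by simp
    have a0: "0 \<le> a i" by (simp add: a_def)
    have "((2 * real i + 1) * x)^2 \<le> 1" using le1 ge0 by (simp add: power_le_one)
    then have a1: "a i \<le> 1/2" by (simp add: a_def)
    have "-(a i + 2 * (a i)^2) \<le> ln (1 - a i)"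
      using ln_one_minus_pos_lower_bound[OF a0 a1] by simp
    then have "exp (-(a i + 2 * (a i)^2)) \<le> exp (ln (1 - a i))" by simp
    also have "\<dots> = 1 - a i" using a1 by simp
    also have "\<dots> \<le> cos ((2 * real i + 1) * x)" using cos_lower[of "(2 * real i + 1) * x"] by (simp add: a_def)
    finally show ?thesis .
  qed
  have "(\<Prod>i<n. exp (-(a i + 2 * (a i)^2))) \<le> F n x"
    unfolding F_def by (intro prod_mono conjI ci) auto
  moreover have "(\<Prod>i<n. exp (-(a i + 2 * (a i)^2))) = exp (-((\<Sum>i<n. a i) + 2 * (\<Sum>i<n. (a i)^2)))"
    by (simp add: exp_sum[symmetric] sum_subtractf sum_distrib_left sum_negf)
  moreover have "(\<Sum>i<n. a i) \<le> 2/3 * real n^3 * x^2"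
  proof -
    have "(\<Sum>i<n. a i) = x^2 / 2 * (\<Sum>i<n. (2 * real i + 1)^2)"
      unfolding a_def sum_distrib_left by (rule sum.cong[OF refl]) (simp add: power_mult_distrib)
    also have "\<dots> = x^2 / 2 * (real n * (4 * real n ^ 2 - 1) / 3)" by (simp add: sum_sq_odd)
    also have "\<dots> \<le> 2/3 * real n^3 * x^2"
      using x0 by (simp add: field_simps power2_eq_square power3_eq_cube)
    finally show ?thesis .
  qed
  moreover have "2 * (\<Sum>i<n. (a i)^2) \<le> 8/5 * real n^5 * x^4"
  proof -
    have "(\<Sum>i<n. (a i)^2) = x^4 / 4 * (\<Sum>i<n. (2 * real i + 1)^4)"
      unfolding a_def sum_distrib_left by (rule sum.cong[OF refl]) (simp add: power_mult_distrib power2_eq_square power4_eq_xxxx)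
    also have "\<dots> = x^4 / 4 * (real n * (2*real n - 1) * (2 * real n + 1) * (12 * real n^2 - 7) / 15)"
      by (simp add: sum_4_odd)
    also have "\<dots> \<le> x^4 / 4 * (16/5 * real n^5)"
    proof (rule mult_left_mono)
      have r1: "1 \<le> real n" using n1 by simp
      have nn: "1 * 1 \<le> real n * real n" by (rule mult_mono[OF r1 r1]) auto
      have "(2*real n - 1) * (2 * real n + 1) * (12 * real n^2 - 7) \<le> 48 * real n^4"
        using nn by (simp add: algebra_simps power2_eq_square power4_eq_xxxx)
      then have "real n * ((2*real n - 1) * (2 * real n + 1) * (12 * real n^2 - 7)) \<le> real n * (48 * real n^4)"
        by (intro mult_left_mono) auto
      then show "real n * (2*real n - 1) * (2 * real n + 1) * (12 * real n^2 - 7) / 15 \<le> 16/5 * real n^5"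
        by (simp add: algebra_simps power_def eval_nat_numeral)
    qed simp
    finally show ?thesis by simp
  qed
  ultimately have "exp (-(2/3 * real n^3 * x^2 + 8/5 * real n^5 * x^4)) \<le> F n x"
    by (smt (verit) exp_le_cancel_iff)
  moreover have "(1 - real n^3 * x^2 / 6)^4 * (1 - 8/5 * real n^5 * x^4) \<le> exp (-(2/3 * real n^3 * x^2)) * exp (-(8/5 * real n^5 * x^4))"
  proof (rule mult_mono)
    show "(1 - real n^3 * x^2 / 6)^4 \<le> exp (-(2/3 * real n^3 * x^2))"
      using exp_ge_pow4[of "2/3 * real n^3 * x^2"] u4 by (simp add: field_simps)
    show "1 - 8/5 * real n^5 * x^4 \<le> exp (-(8/5 * real n^5 * x^4))"
      using exp_ge_add_one_self[of "-(8/5 * real n^5 * x^4)"] by simp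
    show "0 \<le> exp (-(2/3 * real n^3 * x^2))" by simp
    show "0 \<le> 1 - 8/5 * real n^5 * x^4" using v1 by simp
  qed
  ultimately show ?thesis by (simp add: exp_add[symmetric])
qed



lemma R_basic:
  fixes n :: nat and M x :: real
  assumes n1: "1 \<le> n" and M0: "0 \<le> M" and M1: "M \<le> 2 * real n - 1"
    and x0: "0 \<le> x" and x1: "x \<le> pi / (4 * real n)"
  shows "0 \<le> F n x" and "2 * (sin x)^2 * F n x \<le> (cos (M * x) - cos ((M + 2) * x)) * F n x"
proof -
  have nx: "2 * real n * x \<le> pi/2" using x1 n1 by (simp add: field_simps)
  have Fpos: "0 \<le> F n x" unfolding F_def
  proof (intro prod_nonneg cos_ge_zero)
    fix i assume "i \<in> {..<n}"
    then have "(2 * real i + 1) * x \<le> 2 * real n * x" using x0 by (intro mult_right_mono) auto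
    then show "(2 * real i + 1) * x \<le> pi/2" using nx by linarith
    have "0 \<le> (2 * real i + 1) * x" using x0 by simp
    then show "-(pi/2) \<le> (2 * real i + 1) * x" using pi_gt_zero by linarith
  qed
  then show "0 \<le> F n x" .
  have cd: "cos (M * x) - cos ((M + 2) * x) = 2 * sin ((M+1) * x) * sin x"
    using cos_diff_cos[of "M*x" "(M+2)*x"] by (simp add: algebra_simps add_divide_distrib)
  have "(M+1) * x \<le> 2 * real n * x" using M1 x0 by (intro mult_right_mono) auto
  then have Mx: "(M+1) * x \<le> pi/2" using nx by linarith
  have "x \<le> (M+1) * x" using M0 x0 by (simp add: algebra_simps)
  then have ss: "sin x \<le> sin ((M+1) * x)" using Mx x0 by (intro sin_monotone_2pi_le) auto
  have s0: "0 \<le> sin x" using x0 Mx \<open>x \<le> (M+1) * x\<close> by (intro sin_ge_zero) auto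
  have "2 * (sin x)^2 * F n x = (2 * sin x * F n x) * sin x" by (simp add: power2_eq_square)
  also have "\<dots> \<le> (2 * sin x * F n x) * sin ((M+1) * x)"
    using ss s0 Fpos by (intro mult_left_mono) auto
  also have "\<dots> = (cos (M * x) - cos ((M + 2) * x)) * F n x" unfolding cd by simp
  finally show "2 * (sin x)^2 * F n x \<le> (cos (M * x) - cos ((M + 2) * x)) * F n x" .
qed

lemma R_lower:
  fixes n :: nat and M x :: real
  assumes n: "86 \<le> n" and M0: "0 \<le> M" and M1: "M \<le> 2 * real n - 1"
    and x0: "0 \<le> x" and x1: "x \<le> 2 / (real n * sqrt (real n))"
  shows "2 * x^2 * (1 - real n^3 * x^2 / 6)^4 * (1 - x^2/3 - 8/5 * real n^5 * x^4)
          \<le> (cos (M * x) - cos ((M + 2) * x)) * F n x"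
proof -
  define r where "r = sqrt (real n)"
  have nr: "86 \<le> real n" using n by simp
  have rr: "r * r = real n" by (simp add: r_def)
  have r9: "9 \<le> r" unfolding r_def using nr by (simp add: real_le_rsqrt)
  have rpos: "0 < r" using r9 by simp
  have x1': "x * (real n * r) \<le> 2" using x1 rpos nr by (simp add: field_simps r_def)
  have xsq: "x^2 * real n^3 \<le> 4"
  proof -
    have "(x * (real n * r))^2 \<le> 2^2" using x1' x0 rpos nr by (intro power_mono) auto
    then show ?thesis by (simp add: power_mult_distrib power2_eq_square power3_eq_cube rr[symmetric] algebra_simps)
  qed
  have x2nx: "2 * real n * x \<le> 4/9"
  proof -
    have "x * (real n * 9) \<le> x * (real n * r)" using x0 r9 nr by (intro mult_left_mono) auto
    then have "x * (real n * 9) \<le> 2" using x1' by linarith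
    then show ?thesis by (simp add: algebra_simps)
  qed
  have xpi: "x \<le> pi / (4 * real n)"
  proof -
    have "x * (4 * real n) \<le> 16/9" using x2nx by (simp add: algebra_simps)
    also have "\<dots> \<le> pi" using pi_gt3 by linarith
    finally show ?thesis using nr by (simp add: field_simps)
  qed
  have u4: "2/3 * real n^3 * x^2 \<le> 4" using xsq by (simp add: algebra_simps)
  have v: "8/5 * real n^5 * x^4 \<le> 128 / (5 * real n)"
  proof -
    have "(x^2 * real n^3)^2 \<le> 4^2" using xsq by (intro power_mono) auto
    moreover have "x^4 * real n^6 = (x^2 * real n^3)^2" by algebra
    ultimately have "x^4 * real n^6 \<le> 16" by simp
    have e2: "real n * (x^4 * real n^5) = x^4 * real n^6" by algebra
    have "real n * (x^4 * real n^5) \<le> 16" unfolding e2 by fact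
    then show ?thesis using nr by (simp add: field_simps)
  qed
  have "128 / (5 * real n) \<le> 1" using nr by (simp add: field_simps)
  then have v1: "8/5 * real n^5 * x^4 \<le> 1" using v by linarith
  have n1: "1 \<le> n" using n by simp
  have FL: "(1 - real n^3 * x^2 / 6)^4 * (1 - 8/5 * real n^5 * x^4) \<le> F n x"
    using F_lower[OF n1 x0 _ u4 v1] x2nx by simp
  have RB: "2 * (sin x)^2 * F n x \<le> (cos (M * x) - cos ((M + 2) * x)) * F n x"
    using R_basic[OF n1 M0 M1 x0 xpi] by simp
  have sl: "x * (1 - x^2/6) \<le> sin x" using sin_lower[OF x0] by (simp add: algebra_simps power2_eq_square power3_eq_cube)
  have "172 * x \<le> 2 * real n * x" using x0 nr by (intro mult_right_mono) auto
  then have "x \<le> 1" using x2nx by linarith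
  then have xs: "x^2 \<le> 1" using x0 by (simp add: power_le_one)
  have sl0: "0 \<le> x * (1 - x^2/6)" using x0 xs by simp
  have L0: "0 \<le> (1 - real n^3 * x^2 / 6)^4 * (1 - 8/5 * real n^5 * x^4)" using v1 by simp
  have "2 * x^2 * (1 - real n^3 * x^2 / 6)^4 * (1 - x^2/3 - 8/5 * real n^5 * x^4)
      \<le> 2 * x^2 * (1 - real n^3 * x^2 / 6)^4 * ((1 - x^2/3) * (1 - 8/5 * real n^5 * x^4))"
  proof (rule mult_left_mono)
    have "0 \<le> x^2/3 * (8/5 * real n^5 * x^4)" by simp
    then show "1 - x^2/3 - 8/5 * real n^5 * x^4 \<le> (1 - x^2/3) * (1 - 8/5 * real n^5 * x^4)"
      by (simp add: algebra_simps)
  qed simp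
  also have "\<dots> = 2 * (x^2 * (1 - x^2/3)) * ((1 - real n^3 * x^2 / 6)^4 * (1 - 8/5 * real n^5 * x^4))"
    by (simp add: algebra_simps)
  also have "\<dots> \<le> 2 * (x * (1 - x^2/6))^2 * ((1 - real n^3 * x^2 / 6)^4 * (1 - 8/5 * real n^5 * x^4))"
  proof -
    have "0 \<le> (x^3/6)^2" by simp
    moreover have "(x * (1 - x^2/6))^2 = x^2 * (1 - x^2/3) + (x^3/6)^2" by (simp add: power2_eq_square power3_eq_cube field_simps)
    ultimately have "x^2 * (1 - x^2/3) \<le> (x * (1 - x^2/6))^2" by linarith
    then show ?thesis using L0 by (intro mult_right_mono mult_left_mono) auto
  qed
  also have "\<dots> \<le> 2 * (sin x)^2 * F n x"
  proof -
    have "(x * (1 - x^2/6))^2 \<le> (sin x)^2" using sl sl0 by (intro power_mono) auto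
    then show ?thesis using L0 FL by (intro mult_mono mult_left_mono) auto
  qed
  also have "\<dots> \<le> (cos (M * x) - cos ((M + 2) * x)) * F n x" by (rule RB)
  finally show ?thesis .
qed



lemma poly_integral:
  fixes w :: real assumes w: "0 < w"
  shows "((\<lambda>x. w^2 * qpoly e1 e2 (x/w)) has_integral (w^3 * Apoly e1 e2 1)) {0..w}"
proof -
  have d: "((\<lambda>x. w^3 * Apoly e1 e2 (x/w)) has_real_derivative w^2 * qpoly e1 e2 (x/w)) (at x)" for x
  proof -
    have "((\<lambda>x. Apoly e1 e2 (x/w)) has_real_derivative qpoly e1 e2 (x/w) * (1/w)) (at x)"
      using w by (intro DERIV_chain2[OF Apoly_deriv]) (auto intro!: derivative_eq_intros)
    then have "((\<lambda>x. w^3 * Apoly e1 e2 (x/w)) has_real_derivative w^3 * (qpoly e1 e2 (x/w) * (1/w))) (at x)"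
      by (rule DERIV_cmult)
    moreover have "w^3 * (qpoly e1 e2 (x/w) * (1/w)) = w^2 * qpoly e1 e2 (x/w)"
      using w by (simp add: power2_eq_square power3_eq_cube field_simps)
    ultimately show ?thesis by simp
  qed
  have "((\<lambda>x. w^2 * qpoly e1 e2 (x/w)) has_integral (w^3 * Apoly e1 e2 (w/w) - w^3 * Apoly e1 e2 (0/w))) {0..w}"
    using w d
    by (intro fundamental_theorem_of_calculus)
       (auto simp: has_real_derivative_iff_has_vector_derivative[symmetric] intro: has_field_derivative_at_within)
  then show ?thesis using w by (simp add: Apoly_0)
qed

lemma qpoly_eq:
  fixes n :: nat and w x :: real
  assumes w: "0 < w" and wn: "w^2 * real n^3 = 4" and n: "1 \<le> n"
  shows "w^2 * qpoly (4/(3*real n^3)) (128/(5*real n)) (x/w) =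
          2 * x^2 * (1 - real n^3 * x^2 / 6)^4 * (1 - x^2/3 - 8/5 * real n^5 * x^4)"
proof -
  define t where "t = x / w"
  have x: "x = w * t" using w by (simp add: t_def)
  have np: "0 < real n" using n by simp
  have A1: "real n^3 * x^2 / 6 = 2/3 * t^2"
  proof -
    have "real n^3 * x^2 = (w^2 * real n^3) * t^2" by (simp add: x power_mult_distrib algebra_simps)
    then show ?thesis using wn by simp
  qed
  have A2: "x^2/3 = 4/(3*real n^3) * t^2"
  proof -
    have "w^2 = 4 / real n^3" using wn np by (simp add: field_simps)
    then show ?thesis by (simp add: x power_mult_distrib)
  qed
  have A3: "8/5 * real n^5 * x^4 = 128/(5*real n) * t^4"
  proof -
    have "(w^2 * real n^3)^2 = 16" using wn by simp
    then have "w^4 * real n^6 = 16" by (simp add: power_mult_distrib power2_eq_square power4_eq_xxxx power3_eq_cube)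
      (simp add: algebra_simps eval_nat_numeral)
    then have "w^4 * real n^5 = 16 / real n" using np by (simp add: field_simps eval_nat_numeral)
    moreover have "8/5 * real n^5 * x^4 = 8/5 * (w^4 * real n^5) * t^4" by (simp add: x power_mult_distrib)
    ultimately show ?thesis by simp
  qed
  have A4: "2 * x^2 = w^2 * (2 * t^2)" by (simp add: x power_mult_distrib)
  show ?thesis unfolding A1 A2 A3 A4 qpoly_def t_def[symmetric] by (simp add: algebra_simps)
qed



lemma F_cont: "continuous_on A (F n)"
  unfolding F_def[abs_def] by (intro continuous_intros)

lemma half_lower:
  fixes n :: nat and M :: real
  assumes n: "86 \<le> n" and M0: "0 \<le> M" and M1: "M \<le> 2 * real n - 1"
  shows "(2 / (real n * sqrt (real n)))^3 * Apoly (4/(3*real n^3)) (128/(5*real n)) 1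
          - pi * exp (-(0.2587 * real n)) - 7/(2*real n) * exp (-(0.2449 * real n))
         \<le> integral {0..pi/2} (\<lambda>x. (cos (M*x) - cos ((M+2)*x)) * F n x)"
proof -
  define R where "R x = (cos (M*x) - cos ((M+2)*x)) * F n x" for x
  define w where "w = 2 / (real n * sqrt (real n))"
  define q where "q = pi / (4 * real n)"
  define p2 where "p2 = pi/2 - 7/(4 * real n)"
  have nr: "86 \<le> real n" using n by simp
  have n1: "1 \<le> n" using n by simp
  have Rc: "continuous_on A R" for A unfolding R_def by (intro continuous_intros F_cont)
  have Ri: "R integrable_on {a..b}" for a b by (rule integrable_continuous_interval[OF Rc])
  have r9: "9 \<le> sqrt (real n)" using nr by (simp add: real_le_rsqrt)
  have w0: "0 < w" unfolding w_def using nr r9 by simp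
  have wq: "w \<le> q"
  proof -
    have "real n * 9 \<le> real n * sqrt (real n)" using r9 by (intro mult_left_mono) auto
    then have "w \<le> 2 / (real n * 9)" unfolding w_def using nr
      by (intro divide_left_mono) auto
    also have "\<dots> \<le> q" unfolding q_def using nr pi_gt3 by (simp add: field_simps)
    finally show ?thesis .
  qed
  have q0: "0 \<le> q" unfolding q_def by simp
  have qp: "q \<le> p2"
  proof -
    have "pi * 172 \<le> pi * (real n * 2)" using nr by (intro mult_left_mono) auto
    then have "pi + 7 \<le> pi * (real n * 2)" using pi_gt3 by linarith
    then show ?thesis unfolding q_def p2_def using nr by (simp add: field_simps)
  qed
  have p2e: "p2 \<le> pi/2" unfolding p2_def by simp
  have wn: "w^2 * real n^3 = 4"
  proof -
    have "w^2 = 4 / (real n^2 * real n)" unfolding w_def by (simp add: power_divide power_mult_distrib)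
    then show ?thesis using nr by (simp add: field_simps power2_eq_square power3_eq_cube)
  qed
  have I1: "w^3 * Apoly (4/(3*real n^3)) (128/(5*real n)) 1 \<le> integral {0..w} R"
  proof -
    have "integral {0..w} (\<lambda>x. w^2 * qpoly (4/(3*real n^3)) (128/(5*real n)) (x/w)) \<le> integral {0..w} R"
    proof (rule integral_le)
      show "(\<lambda>x. w^2 * qpoly (4/(3*real n^3)) (128/(5*real n)) (x/w)) integrable_on {0..w}"
        using poly_integral[OF w0] by blast
      show "R integrable_on {0..w}" by (rule Ri)
      fix x assume "x \<in> {0..w}"
      then have x: "0 \<le> x" "x \<le> 2 / (real n * sqrt (real n))" by (auto simp: w_def)
      show "w^2 * qpoly (4/(3*real n^3)) (128/(5*real n)) (x/w) \<le> R x"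
        unfolding qpoly_eq[OF w0 wn n1] R_def by (rule R_lower[OF n M0 M1 x])
    qed
    then show ?thesis using integral_unique[OF poly_integral[OF w0]] by simp
  qed
  have I2: "0 \<le> integral {w..q} R"
  proof (rule integral_nonneg[OF Ri])
    fix x assume "x \<in> {w..q}"
    then have x: "0 \<le> x" "x \<le> pi / (4 * real n)" using w0 by (auto simp: q_def)
    have "0 \<le> 2 * (sin x)^2 * F n x" using R_basic(1)[OF n1 M0 M1 x] by simp
    then show "0 \<le> R x" unfolding R_def using R_basic(2)[OF n1 M0 M1 x] by linarith
  qed
  have Rabs: "- (2 * \<bar>F n x\<bar>) \<le> R x" for x
  proof -
    have "\<bar>cos (M*x) - cos ((M+2)*x)\<bar> \<le> 2"
      using abs_cos_le_one[of "M*x"] abs_cos_le_one[of "(M+2)*x"] by linarith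
    then have "\<bar>R x\<bar> \<le> 2 * \<bar>F n x\<bar>" unfolding R_def abs_mult by (intro mult_right_mono) auto
    then show ?thesis by linarith
  qed
  have I3: "- pi * exp (-(0.2587 * real n)) \<le> integral {q..p2} R"
  proof -
    define E where "E = exp (-(0.2587 * real n))"
    have E0: "0 \<le> E" by (simp add: E_def)
    have le: "integral {q..p2} (\<lambda>x. - (2 * E)) \<le> integral {q..p2} R"
    proof (rule integral_le[OF _ Ri])
      fix x assume "x \<in> {q..p2}"
      then have "\<bar>F n x\<bar> \<le> E" unfolding E_def
        by (intro F_mid[OF n]) (auto simp: q_def p2_def)
      then show "- (2 * E) \<le> R x" using Rabs[of x] by linarith
    qed (intro integrable_continuous_interval continuous_intros)
    have c: "integral {q..p2} (\<lambda>x. - (2 * E)) = - ((p2 - q) * (2 * E))" using qp by simp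
    have "(p2 - q) * 2 \<le> pi" using q0 p2e by simp
    then have "((p2 - q) * 2) * E \<le> pi * E" using E0 by (intro mult_right_mono)
    then have m: "(p2 - q) * (2 * E) \<le> pi * E" by (simp add: algebra_simps)
    show ?thesis using le c m unfolding E_def[symmetric] by linarith
  qed
  have I4: "- (7/(2*real n)) * exp (-(0.2449 * real n)) \<le> integral {p2..pi/2} R"
  proof -
    define E where "E = exp (-(0.2449 * real n))"
    have le: "integral {p2..pi/2} (\<lambda>x. - (2 * E)) \<le> integral {p2..pi/2} R"
    proof (rule integral_le[OF _ Ri])
      fix x assume "x \<in> {p2..pi/2}"
      then have "\<bar>F n x\<bar> \<le> E" unfolding E_def
        by (intro F_end[OF n]) (auto simp: p2_def)
      then show "- (2 * E) \<le> R x" using Rabs[of x] by linarith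
    qed (intro integrable_continuous_interval continuous_intros)
    have c: "integral {p2..pi/2} (\<lambda>x. - (2 * E)) = - ((pi/2 - p2) * (2 * E))" using p2e by simp
    have m: "(pi/2 - p2) * (2 * E) = 7/(2*real n) * E" unfolding p2_def by (simp add: field_simps)
    show ?thesis using le c m unfolding E_def[symmetric] by linarith
  qed
  have "integral {0..pi/2} R = integral {0..w} R + integral {w..q} R + integral {q..p2} R + integral {p2..pi/2} R"
  proof -
    have "integral {0..pi/2} R = integral {0..p2} R + integral {p2..pi/2} R"
      using w0 wq qp p2e by (subst Henstock_Kurzweil_Integration.integral_combine[symmetric]) (auto intro: Ri)
    moreover have "integral {0..p2} R = integral {0..q} R + integral {q..p2} R"
      using w0 wq qp by (subst Henstock_Kurzweil_Integration.integral_combine[symmetric]) (auto intro: Ri)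
    moreover have "integral {0..q} R = integral {0..w} R + integral {w..q} R"
      using w0 wq by (subst Henstock_Kurzweil_Integration.integral_combine[symmetric]) (auto intro: Ri)
    ultimately show ?thesis by simp
  qed
  then show ?thesis using I1 I2 I3 I4 unfolding R_def[symmetric] w_def[symmetric] by linarith
qed



lemma exp1_lower: "2.718 \<le> exp (1::real)"
proof -
  have "(\<Sum>m<8. (1::real) ^ m / fact m) \<le> exp 1" by (rule exp_taylor_lower) simp
  moreover have "(\<Sum>m<8. (1::real) ^ m / fact m) = 685/252"
    by (simp add: lessThan_Suc eval_nat_numeral fact_Suc)
  ultimately show ?thesis by simp
qed

lemma exp446: "86 \<le> exp (4.46::real)"
proof -
  have "(\<Sum>m<5. (0.46::real) ^ m / fact m) \<le> exp 0.46" by (rule exp_taylor_lower) simp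
  moreover have "(\<Sum>m<5. (0.46::real) ^ m / fact m) \<ge> 1.58"
    by (simp add: lessThan_Suc eval_nat_numeral fact_Suc)
  ultimately have a: "1.58 \<le> exp (0.46::real)" by linarith
  have "2.718^4 \<le> (exp (1::real))^4" using exp1_lower by (intro power_mono) auto
  also have "\<dots> = exp 4" by (simp add: exp_of_nat_mult[symmetric])
  finally have b: "2.718^4 \<le> exp (4::real)" .
  have "exp (4.46::real) = exp 4 * exp 0.46" by (simp add: exp_add[symmetric])
  moreover have "(2.718^4) * 1.58 \<le> exp (4::real) * exp 0.46" using a b by (intro mult_mono) auto
  moreover have "(86::real) \<le> 2.718^4 * 1.58" by (simp add: power_divide)
  ultimately show ?thesis by linarith
qed

lemma ln86: "ln (86::real) \<le> 4.46"
  using exp446 by (metis exp_gt_zero ln_exp ln_le_cancel_iff zero_less_numeral)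

lemma expP:
  fixes n :: nat and c :: real
  assumes n: "86 \<le> n" and c: "9/2/86 \<le> c"
  shows "exp (-(c * real n)) * real n powr (9/2) \<le> exp (-(86*c) + 9/2 * 4.46)"
proof -
  have nr: "86 \<le> real n" using n by simp
  have "ln (real n) = ln 86 + ln (real n / 86)" using nr by (simp add: ln_div)
  also have "\<dots> \<le> 4.46 + (real n / 86 - 1)" using ln86 ln_le_minus_one[of "real n / 86"] nr by simp
  finally have l: "ln (real n) \<le> 4.46 + (real n / 86 - 1)" .
  have "real n powr (9/2) = exp (9/2 * ln (real n))" using nr by (simp add: powr_def)
  then have "exp (-(c * real n)) * real n powr (9/2) = exp (-(c * real n)) * exp (9/2 * ln (real n))"
    by simp
  also have "\<dots> = exp (-(c * real n) + 9/2 * ln (real n))" by (rule exp_add[symmetric])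
  also have "\<dots> \<le> exp (-(86*c) + 9/2 * 4.46)"
  proof -
    have "(9/2/86 - c) * (real n - 86) \<le> 0" using c nr by (intro mult_nonpos_nonneg) auto
    then have "9/2/86 * real n - 9/2 - c * real n + 86 * c \<le> 0" by (simp add: algebra_simps diff_divide_distrib; linarith)
    then have "-(c * real n) + 9/2 * ln (real n) \<le> -(86*c) + 9/2 * 4.46" using l by linarith
    then show ?thesis by simp
  qed
  finally show ?thesis .
qed



lemma even_integral:
  fixes f :: "real \<Rightarrow> real" and a :: real
  assumes a: "0 \<le> a" and ev: "\<And>x. f (-x) = f x" and c: "continuous_on UNIV f"
  shows "integral {-a..a} f = 2 * integral {0..a} f"
proof -
  have i: "f integrable_on {u..v}" for u v by (rule integrable_continuous_interval) (rule continuous_on_subset[OF c], simp)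
  have "integral {-a..a} f = integral {-a..0} f + integral {0..a} f"
    using a by (subst Henstock_Kurzweil_Integration.integral_combine[symmetric]) (auto intro: i)
  moreover have "integral {-a..0} f = integral {0..a} f"
  proof -
    have "integral {-a..-0} (\<lambda>x. f (-x)) = integral {0..a} f" by (rule Henstock_Kurzweil_Integration.integral_reflect_real)
    then show ?thesis by (simp add: ev)
  qed
  ultimately show ?thesis by simp
qed

lemma F_even: "F n (-x) = F n x"
  by (simp add: F_def)

lemma exp_up1: "exp (-(86 * 0.2587) + 9/2 * 4.46) \<le> (0.1136::real)"
proof -
  have e: "-(86 * 0.2587) + 9/2 * 4.46 = - (2.1782::real)" by simp
  have "(\<Sum>m<9. (2.1782::real) ^ m / fact m) \<le> exp 2.1782" by (rule exp_taylor_lower) simp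
  moreover have "(\<Sum>m<9. (2.1782::real) ^ m / fact m) \<ge> 8.81"
    by (simp add: lessThan_Suc eval_nat_numeral fact_Suc power_divide)
  ultimately have "8.81 \<le> exp (2.1782::real)" by linarith
  then have "exp (- 2.1782) \<le> 1 / (8.81::real)" by (simp add: exp_minus field_simps)
  then show ?thesis unfolding e by simp
qed

lemma exp_up2: "exp (-(86 * 0.2449) + 9/2 * 4.46) \<le> (0.372::real)"
proof -
  have e: "-(86 * 0.2449) + 9/2 * 4.46 = - (0.9914::real)" by simp
  have "(\<Sum>m<6. (0.9914::real) ^ m / fact m) \<le> exp 0.9914" by (rule exp_taylor_lower) simp
  moreover have "(\<Sum>m<6. (0.9914::real) ^ m / fact m) \<ge> 2.69"
    by (simp add: lessThan_Suc eval_nat_numeral fact_Suc power_divide)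
  ultimately have "2.69 \<le> exp (0.9914::real)" by linarith
  then have "exp (- 0.9914) \<le> 1 / (2.69::real)" by (simp add: exp_minus field_simps)
  then show ?thesis unfolding e by simp
qed



lemma Cpi: "3 * sqrt 3 / (2 * sqrt 2 * pi powr (3/2)) * pi \<le> (104/100::real)"
proof -
  have s3: "sqrt 3 \<le> (17321/10000::real)" by (rule real_le_lsqrt) (simp_all add: power2_eq_square)
  have s2: "(14142/10000::real) \<le> sqrt 2" by (rule real_le_rsqrt) (simp add: power2_eq_square)
  have "(1772/1000::real)^2 \<le> pi" using pi_bounds by (simp add: power2_eq_square)
  then have sp: "(1772/1000::real) \<le> sqrt pi" by (rule real_le_rsqrt)
  have pp: "pi powr (3/2) = pi * sqrt pi"
  proof -
    have "pi powr (3/2) = pi powr (1 + 1/2)" by simp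
    also have "\<dots> = pi powr 1 * pi powr (1/2)" by (rule powr_add)
    finally show ?thesis by (simp add: powr_half_sqrt)
  qed
  have pos: "0 < 2 * sqrt 2 * sqrt pi" by simp
  have "3 * sqrt 3 / (2 * sqrt 2 * pi powr (3/2)) * pi = 3 * sqrt 3 / (2 * sqrt 2 * sqrt pi)"
    unfolding pp using pi_gt_zero by (simp add: field_simps)
  also have "\<dots> \<le> 104/100"
  proof -
    have "2 * (14142/10000) * (1772/1000) \<le> 2 * sqrt 2 * sqrt (pi::real)" using s2 sp by (intro mult_mono) auto
    then have "3 * sqrt 3 \<le> 104/100 * (2 * sqrt 2 * sqrt pi)" using s3 by linarith
    then show ?thesis using pos by (simp add: divide_le_eq)
  qed
  finally show ?thesis .
qed

lemma Apoly_lower: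
  fixes n :: nat assumes n: "86 \<le> n"
  shows "0.1279 \<le> Apoly (4/(3*real n^3)) (128/(5*real n)) 1"
proof -
  have nr: "86 \<le> real n" using n by simp
  have "real n^3 \<ge> 86^3" using nr by (intro power_mono) auto
  then have a: "4/(3*real n^3) \<le> 4/(3*86^3)" using n by (intro divide_left_mono) auto
  have b: "128/(5*real n) \<le> 128/(5*86)" using nr n by (intro divide_left_mono) auto
  have "12578/93555 - 4/(3*86^3) * (18482/405405) - 128/(5*86) * (26722/1216215) \<le> Apoly (4/(3*real n^3)) (128/(5*real n)) 1"
    unfolding Apoly_1 using a b by (intro diff_mono mult_right_mono) auto
  moreover have "0.1279 \<le> 12578/93555 - 4/(3*86^3) * (18482/405405) - 128/(5*86) * (26722/(1216215::real))"
    by simp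
  ultimately show ?thesis by linarith
qed



theorem lemma5p2:
  fixes n :: nat and k :: int
  assumes "n \<ge> 86"
    and "(real n - 1) ^ 2 / 2 \<le> real_of_int k"
    and "real_of_int k \<le> real n ^ 2 / 2"
  shows "real (b k n) - real (b (k - 1) n)
         \<ge> (3 * sqrt 3 / (2 * sqrt 2 * pi powr (3/2))) * 2 ^ n / real n powr (9/2)"
proof -
  have n: "86 \<le> n" using assms(1) by simp
  have nr: "86 \<le> real n" using n by simp
  define M where "M = real n ^ 2 - 2 * real_of_int k"
  have M0: "0 \<le> M" using assms(3) by (simp add: M_def)
  have M1: "M \<le> 2 * real n - 1" using assms(2) by (simp add: M_def power2_eq_square algebra_simps)
  define d where "d = real (b k n) - real (b (k - 1) n)"
  define R where "R x = (cos (M*x) - cos ((M+2)*x)) * F n x" for x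
  define J where "J = integral {0..pi/2} R"
  define w where "w = 2 / (real n * sqrt (real n))"
  define A where "A = Apoly (4/(3*real n^3)) (128/(5*real n)) 1"
  define E1 where "E1 = exp (-(0.2587 * real n))"
  define E2 where "E2 = exp (-(0.2449 * real n))"
  define P where "P = real n powr (9/2)"
  define C where "C = 3 * sqrt 3 / (2 * sqrt 2 * pi powr (3/2))"
  have LB: "w^3 * A - pi * E1 - 7/(2*real n) * E2 \<le> J"
    unfolding w_def A_def E1_def E2_def J_def R_def using half_lower[OF n M0 M1] by simp
  have KI: "((\<lambda>x. (cos (M * x) - cos ((M + 2) * x)) * (2 ^ n * F n x)) has_integral pi * d) {-pi/2..pi/2}"
    unfolding M_def d_def by (rule key_integral)
  have Rc: "continuous_on UNIV R" unfolding R_def by (intro continuous_intros F_cont)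
  have Rev: "R (-x) = R x" for x unfolding R_def by (simp add: F_even)
  have "((\<lambda>x. 2 ^ n * R x) has_integral pi * d) {-(pi/2)..pi/2}"
    using KI unfolding R_def by (simp add: algebra_simps)
  then have "integral {-(pi/2)..pi/2} (\<lambda>x. 2 ^ n * R x) = pi * d" by (rule integral_unique)
  moreover have "integral {-(pi/2)..pi/2} (\<lambda>x. 2 ^ n * R x) = 2 ^ n * integral {-(pi/2)..pi/2} R"
    by (simp add: integral_mult_right)
  moreover have "integral {-(pi/2)..pi/2} R = 2 * J"
    unfolding J_def by (rule even_integral[OF _ Rev Rc]) simp
  ultimately have dJ: "pi * d = 2 ^ n * (2 * J)" by simp
  have sq: "sqrt (real n) * sqrt (real n) = real n" by simp
  have sn: "0 < sqrt (real n)" using nr by simp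
  have Pe: "P = real n ^ 4 * sqrt (real n)"
  proof -
    have "P = real n powr (4 + 1/2)" by (simp add: P_def)
    also have "\<dots> = real n powr 4 * real n powr (1/2)" by (rule powr_add)
    finally show ?thesis using nr by (simp add: powr_half_sqrt powr_realpow)
  qed
  have P0: "0 < P" using Pe nr sn by simp
  have wP: "w^3 * P = 8"
  proof -
    have "w^3 * P = 8 * real n ^ 4 * sqrt (real n) / (real n^3 * (sqrt (real n) * sqrt (real n)) * sqrt (real n))"
      unfolding w_def Pe by (simp add: power3_eq_cube power_mult_distrib)
    also have "\<dots> = 8" unfolding sq using nr sn by (simp add: field_simps power3_eq_cube eval_nat_numeral)
    finally show ?thesis .
  qed
  have E1P: "E1 * P \<le> 0.1136"
    using expP[OF n, of "0.2587"] exp_up1 unfolding E1_def P_def by simp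
  have E2P: "E2 * P \<le> 0.372"
    using expP[OF n, of "0.2449"] exp_up2 unfolding E2_def P_def by simp
  have A0: "0.1279 \<le> A" unfolding A_def by (rule Apoly_lower[OF n])
  have key: "104/100 \<le> 2 * ((w^3 * A - pi * E1 - 7/(2*real n) * E2) * P)"
  proof -
    have "2 * ((w^3 * A - pi * E1 - 7/(2*real n) * E2) * P) = 2 * (w^3 * P) * A - 2 * pi * (E1 * P) - 7/real n * (E2 * P)"
      using nr by (simp add: algebra_simps)
    also have "\<dots> = 16 * A - 2 * pi * (E1 * P) - 7/real n * (E2 * P)" unfolding wP by simp
    finally have eq: "2 * ((w^3 * A - pi * E1 - 7/(2*real n) * E2) * P) = 16 * A - 2 * pi * (E1 * P) - 7/real n * (E2 * P)" .
    have t1: "2 * pi * (E1 * P) \<le> 2 * 3.1416 * 0.1136"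
      using pi_bounds E1P by (intro mult_mono) (auto simp: E1_def P0 less_imp_le)
    have "7/real n \<le> 7/86" using nr by (intro divide_left_mono) auto
    then have t2: "7/real n * (E2 * P) \<le> 7/86 * 0.372"
      using E2P by (intro mult_mono) (auto simp: E2_def P0 less_imp_le)
    show ?thesis unfolding eq using t1 t2 A0 by simp
  qed
  have "C * 2 ^ n / P = (C * pi) * 2 ^ n / (pi * P)" using P0 by (simp add: field_simps)
  also have "\<dots> \<le> (104/100) * 2 ^ n / (pi * P)"
    using Cpi P0 unfolding C_def by (intro divide_right_mono mult_right_mono) auto
  also have "\<dots> \<le> 2 * ((w^3 * A - pi * E1 - 7/(2*real n) * E2) * P) * 2 ^ n / (pi * P)"
    using key P0 by (intro divide_right_mono mult_right_mono) auto
  also have "\<dots> = 2 ^ n * (2 * (w^3 * A - pi * E1 - 7/(2*real n) * E2)) / pi"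
    using P0 by (simp add: field_simps)
  also have "\<dots> \<le> 2 ^ n * (2 * J) / pi"
    using LB by (intro divide_right_mono mult_left_mono) auto
  also have "\<dots> = d" using dJ by (simp add: field_simps)
  finally show ?thesis unfolding d_def C_def P_def by simp
qed

end
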